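(* Let $\frac1n<\alpha\le1$. Let $E(\tau)$ be a family of ellipsoids in $\mathbb{R}^{n+1}$ centered at the origin with fixed volume, let $r_{\min}(\tau)$ and $r_{\max}(\tau)$ be half of the minor axis and half of the major axis of $E(\tau)$, respectively, and let $\tilde I(\tau)$ be the integral quantity of $E(\tau)$. If $r_{\max}(\tau)\to\infty$, then $\tilde I(\tau)\to\infty$.
   Context: For a compact convex hypersurface whose enclosed region contains the origin in its interior, with support function $\tilde S(z)=\langle z,\tilde X(\nu^{-1}(z))\rangle>0$ ($z\in\mathbb{S}^n$, $\nu$ the outward unit normal), the integral quantity is $\tilde I=\big(\int_{\mathbb{S}^n}\tilde S^{1-\frac1\alpha}d\sigma_{\mathbb{S}^n}\big)^{-1}$ if $\alpha<1$ and $\tilde I=\int_{\mathbb{S}^n}\log\tilde S\,d\sigma_{\mathbb{S}^n}$ if $\alpha=1$. *)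

theory Defs
  imports "HOL-Analysis.Analysis"
begin

text \<open>Ellipsoids in R^(n+1) centred at the origin: images of the closed unit ball
  under an invertible linear map. The dimension n+1 is CARD('n).\<close>
definition origin_ellipsoid :: "(real^'n) set \<Rightarrow> bool" where
  "origin_ellipsoid E \<longleftrightarrow>
     (\<exists>A :: real^'n^'n. invertible A \<and> E = (\<lambda>x. A *v x) ` cball 0 1)"

definition support_fun :: "(real^'n) set \<Rightarrow> real^'n \<Rightarrow> real" where
  "support_fun E z = Sup ((\<lambda>x. z \<bullet> x) ` E)"

definition r_max :: "(real^'n) set \<Rightarrow> real" where
  "r_max E = Sup (norm ` E)"

definition r_min :: "(real^'n) set \<Rightarrow> real" where
  "r_min E = Inf (norm ` frontier E)"

text \<open>Integral over the unit sphere S^n in R^(n+1) with respect to the standard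
  surface measure, via polar coordinates:
  int_{S^n} g d\<sigma> = (n+1) * int_{B^(n+1)} g(x/|x|) dx.\<close>
definition sphere_integral :: "(real^'n \<Rightarrow> real) \<Rightarrow> real" where
  "sphere_integral g = real CARD('n) * integral (cball 0 1) (\<lambda>x. g (x /\<^sub>R norm x))"

definition integral_quantity :: "real \<Rightarrow> (real^'n) set \<Rightarrow> real" where
  "integral_quantity \<alpha> E =
     (if \<alpha> < 1 then inverse (sphere_integral (\<lambda>z. support_fun E z powr (1 - 1 / \<alpha>)))
      else sphere_integral (\<lambda>z. ln (support_fun E z)))"

end

theory Submission
  imports Defs
begin

lemma my_measure_linear_image:
  fixes f :: "real^'n \<Rightarrow> real^'n"
  assumes "linear f" "S \<in> lmeasurable"
  shows "f ` S \<in> lmeasurable \<and> measure lebesgue (f ` S) = \<bar>det (matrix f)\<bar> * measure lebesgue S"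
proof -
  let ?Q = "\<lambda>(f::real^'n\<Rightarrow>real^'n) S. measure lebesgue (f ` S) = \<bar>det (matrix f)\<bar> * measure lebesgue S"
  have "\<forall>S \<in> lmeasurable. (f ` S) \<in> lmeasurable \<and> ?Q f S"
  proof (rule induct_linear_elementary [OF \<open>linear f\<close>]; intro ballI)
    fix f g and S :: "(real,'n) vec set"
    assume "linear f" and "linear g"
      and f [rule_format]: "\<forall>S \<in> lmeasurable. f ` S \<in> lmeasurable \<and> ?Q f S"
      and g [rule_format]: "\<forall>S \<in> lmeasurable. g ` S \<in> lmeasurable \<and> ?Q g S"
      and S: "S \<in> lmeasurable"
    then have gS: "g ` S \<in> lmeasurable"
      by blast
    show "(f \<circ> g) ` S \<in> lmeasurable \<and> ?Q (f \<circ> g) S"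
      using f [OF gS] g [OF S] matrix_compose [OF \<open>linear g\<close> \<open>linear f\<close>]
      by (simp add: o_def image_comp abs_mult det_mul)
  next
    fix f :: "real^'n::_ \<Rightarrow> real^'n::_" and i and S :: "(real^'n::_) set"
    assume "linear f" and 0: "\<And>x. f x $ i = 0" and "S \<in> lmeasurable"
    then have "\<not> inj f"
      by (metis (full_types) linear_injective_imp_surjective one_neq_zero surjE vec_component)
    have detf: "det (matrix f) = 0"
      using \<open>\<not> inj f\<close> det_nz_iff_inj[OF \<open>linear f\<close>] by blast
    show "f ` S \<in> lmeasurable \<and> ?Q f S"
    proof
      show "f ` S \<in> lmeasurable"
        using lmeasurable_iff_indicator_has_integral \<open>linear f\<close> \<open>\<not> inj f\<close> negligible_UNIV negligible_linear_singular_image by blast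
      have "measure lebesgue (f ` S) = 0"
        by (meson \<open>\<not> inj f\<close> \<open>linear f\<close> negligible_imp_measure0 negligible_linear_singular_image)
      also have "\<dots> = \<bar>det (matrix f)\<bar> * measure lebesgue S"
        by (simp add: detf)
      finally show "?Q f S" .
    qed
  next
    fix c and S :: "(real^'n::_) set"
    assume "S \<in> lmeasurable"
    show "(\<lambda>a. \<chi> i. c i * a $ i) ` S \<in> lmeasurable \<and> ?Q (\<lambda>a. \<chi> i. c i * a $ i) S"
    proof
      show "(\<lambda>a. \<chi> i. c i * a $ i) ` S \<in> lmeasurable"
        by (simp add: \<open>S \<in> lmeasurable\<close> measurable_stretch)
      show "?Q (\<lambda>a. \<chi> i. c i * a $ i) S"
        by (simp add: measure_stretch [OF \<open>S \<in> lmeasurable\<close>, of c] axis_def matrix_def det_diagonal)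
    qed
  next
    fix m :: "'n" and n :: "'n" and S :: "(real, 'n) vec set"
    assume "m \<noteq> n" and "S \<in> lmeasurable"
    let ?h = "\<lambda>v::(real, 'n) vec. \<chi> i. v $ Transposition.transpose m n i"
    have lin: "linear ?h"
      by (rule linearI) (simp_all add: plus_vec_def scaleR_vec_def)
    have meq: "measure lebesgue ((\<lambda>v::(real, 'n) vec. \<chi> i. v $ Transposition.transpose m n i) ` cbox a b)
             = measure lebesgue (cbox a b)" for a b
    proof (cases "cbox a b = {}")
      case True then show ?thesis
        by simp
    next
      case False
      then have him: "?h ` (cbox a b) \<noteq> {}"
        by blast
      have eq: "?h ` (cbox a b) = cbox (?h a) (?h b)"
        by (auto simp: image_iff lambda_swap_Galois mem_box_cart) (metis transpose_involutory)+
      show ?thesis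
        using him prod.permute [OF permutes_swap_id, where S=UNIV and g="\<lambda>i. (b - a)$i", symmetric]
        by (simp add: eq content_cbox_cart False)
    qed
    have "(\<chi> i j. if Transposition.transpose m n i = j then 1 else 0) = (\<chi> i j. if j = Transposition.transpose m n i then 1 else (0::real))"
      by (auto intro!: Cart_lambda_cong)
    then have "matrix ?h = transpose(\<chi> i j. mat 1 $ i $ Transposition.transpose m n j)"
      by (auto simp: matrix_eq transpose_def axis_def mat_def matrix_def)
    then have 1: "\<bar>det (matrix ?h)\<bar> = 1"
      by (simp add: det_permute_columns permutes_swap_id sign_swap_id abs_mult)
    show "?h ` S \<in> lmeasurable \<and> ?Q ?h S"
      using measure_linear_sufficient [OF lin \<open>S \<in> lmeasurable\<close>] meq 1 by force
  next
    fix m n :: "'n" and S :: "(real, 'n) vec set"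
    assume "m \<noteq> n" and "S \<in> lmeasurable"
    let ?h = "\<lambda>v::(real, 'n) vec. \<chi> i. if i = m then v $ m + v $ n else v $ i"
    have lin: "linear ?h"
      by (rule linearI) (auto simp: algebra_simps plus_vec_def scaleR_vec_def vec_eq_iff)
    have "matrix ?h = (\<chi> k. if k = m then row m (mat 1) + 1 *s row n (mat 1) else row k (mat 1))"
      by (auto simp: vec_eq_iff matrix_def row_def mat_def axis_def)
    then have 1: "det(matrix ?h) = 1"
      using det_row_operation[OF \<open>m \<noteq> n\<close>, of "mat 1" 1] by simp
    have meq: "measure lebesgue (?h ` (cbox a b)) = measure lebesgue (cbox a b)" for a b
    proof (cases "cbox a b = {}")
      case True then show ?thesis by simp
    next
      case False
      then have ne: "(+) (\<chi> i. if i = n then - a $ n else 0) ` cbox a b \<noteq> {}"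
        by auto
      let ?v = "\<chi> i. if i = n then - a $ n else 0"
      have "?h ` cbox a b
            = (+) (\<chi> i. if i = m \<or> i = n then a $ n else 0) ` ?h ` (+) ?v ` (cbox a b)"
        using \<open>m \<noteq> n\<close> unfolding image_comp o_def by (force simp: vec_eq_iff)
      then have "measure lebesgue (?h ` (cbox a b))
               = measure lebesgue ((\<lambda>v. \<chi> i. if i = m then v $ m + v $ n else v $ i) `
                                   (+) ?v ` cbox a b)"
        by (rule ssubst) (rule measure_translation)
      also have "\<dots> = measure lebesgue ((\<lambda>v. \<chi> i. if i = m then v $ m + v $ n else v $ i) ` cbox (?v +a) (?v + b))"
        by (metis (no_types, lifting) cbox_translation)
      also have "\<dots> = measure lebesgue ((+) ?v ` cbox a b)"
        apply (subst measure_shear_interval)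
        using \<open>m \<noteq> n\<close> ne apply auto
        apply (simp add: cbox_translation)
        by (metis cbox_borel cbox_translation measure_completion sets_lborel)
      also have "\<dots> = measure lebesgue (cbox a b)"
        by (rule measure_translation)
        finally show ?thesis .
      qed
    show "?h ` S \<in> lmeasurable \<and> ?Q ?h S"
      using measure_linear_sufficient [OF lin \<open>S \<in> lmeasurable\<close>] meq 1 by force
  qed
  with assms show ?thesis by blast
qed

lemma sup_inner_cball: "Sup ((\<lambda>x. w \<bullet> x) ` cball (0::real^'n) 1) = norm w"
proof (rule cSup_eq_maximum)
  show "norm w \<in> (\<lambda>x. w \<bullet> x) ` cball 0 1"
  proof (cases "w = 0")
    case True then show ?thesis by (auto intro!: image_eqI[where x=0])
  next
    case False
    then show ?thesis
      by (auto intro!: image_eqI[where x="w /\<^sub>R norm w"] simp: dot_square_norm power2_eq_square)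
  qed
  show "y \<le> norm w" if "y \<in> (\<lambda>x. w \<bullet> x) ` cball 0 1" for y
  proof -
    from that obtain x where "norm x \<le> 1" "y = w \<bullet> x" by auto
    then have "y \<le> norm w * norm x" using norm_cauchy_schwarz by auto
    also have "\<dots> \<le> norm w" using \<open>norm x \<le> 1\<close> by (simp add: mult_left_le)
    finally show ?thesis .
  qed
qed

lemma support_ellipsoid:
  "support_fun ((\<lambda>x. A *v x) ` cball 0 1) z = norm (transpose A *v z)"
proof -
  have "(\<lambda>x. z \<bullet> x) ` (\<lambda>x. A *v x) ` cball 0 1 = (\<lambda>x. (transpose A *v z) \<bullet> x) ` cball 0 1"
    by (auto simp: image_image dot_lmul_matrix)
  then show ?thesis unfolding support_fun_def by (simp add: sup_inner_cball)
qed

lemma measure_cbox_sym: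
  fixes r :: real assumes "r \<ge> 0"
  shows "measure lebesgue (cbox (\<chi> i. - r) (\<chi> i. r) :: (real^'n) set) = (2*r) ^ CARD('n)"
proof -
  have ne: "cbox (\<chi> i. - r) (\<chi> i. r) \<noteq> ({} :: (real^'n) set)"
    using assms by (auto simp: interval_ne_empty_cart)
  show ?thesis
    using content_cbox_cart[OF ne] by simp
qed

lemma measure_preimage_ball:
  fixes B :: "real^'n^'n"
  assumes "invertible B" "r > 0"
  shows "measure lebesgue ({x. norm (B *v x) < r} \<inter> cball 0 1) \<le> 2 ^ CARD('n) / \<bar>det B\<bar> * r ^ CARD('n)"
proof -
  obtain B' where BB: "B ** B' = mat 1" "B' ** B = mat 1"
    using assms(1) unfolding invertible_def by auto
  have dd: "det B * det B' = 1"
    using BB(1) by (metis det_I det_mul)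
  have eq: "{x. norm (B *v x) < r} = (\<lambda>y. B' *v y) ` ball 0 r"
  proof (rule set_eqI, rule iffI)
    fix x assume "x \<in> {x. norm (B *v x) < r}"
    then show "x \<in> (\<lambda>y. B' *v y) ` ball 0 r"
      using BB(2) by (auto intro!: image_eqI[where x="B *v x"] simp: matrix_vector_mul_assoc)
  next
    fix x assume "x \<in> (\<lambda>y. B' *v y) ` ball 0 r"
    then show "x \<in> {x. norm (B *v x) < r}"
      using BB(1) by (auto simp: matrix_vector_mul_assoc)
  qed
  have lin: "linear (\<lambda>y. B' *v y)" by simp
  have m1: "(\<lambda>y. B' *v y) ` ball 0 r \<in> lmeasurable"
    and m2: "measure lebesgue ((\<lambda>y. B' *v y) ` ball 0 r) = \<bar>det B'\<bar> * measure lebesgue (ball (0::real^'n) r)"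
    using my_measure_linear_image[OF lin, of "ball 0 r"] by auto
  have sub: "ball (0::real^'n) r \<subseteq> cbox (\<chi> i. - r) (\<chi> i. r)"
  proof
    fix x :: "real^'n" assume "x \<in> ball 0 r"
    then have "\<bar>x $ i\<bar> \<le> r" for i using component_le_norm_cart[of x i] by auto
    then show "x \<in> cbox (\<chi> i. - r) (\<chi> i. r)" unfolding mem_box_cart by (metis abs_le_iff minus_le_iff vec_lambda_beta)
  qed
  have "measure lebesgue (ball (0::real^'n) r) \<le> measure lebesgue (cbox (\<chi> i. - r) (\<chi> i. r) :: (real^'n) set)"
    by (rule measure_mono_fmeasurable[OF sub]) auto
  also have "\<dots> = (2*r) ^ CARD('n)" by (rule measure_cbox_sym) (use assms in auto)
  finally have mb: "measure lebesgue (ball (0::real^'n) r) \<le> (2*r) ^ CARD('n)" .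
  have "measure lebesgue ({x. norm (B *v x) < r} \<inter> cball 0 1) \<le> measure lebesgue {x. norm (B *v x) < r}"
    unfolding eq by (rule measure_mono_fmeasurable) (auto intro!: fmeasurableD[OF fmeasurable_Int_fmeasurable[OF m1]] simp: m1)
  also have "\<dots> = \<bar>det B'\<bar> * measure lebesgue (ball (0::real^'n) r)" using eq m2 by simp
  also have "\<dots> \<le> \<bar>det B'\<bar> * (2*r) ^ CARD('n)" by (rule mult_left_mono[OF mb]) simp
  also have "\<bar>det B'\<bar> = 1 / \<bar>det B\<bar>" proof -
    have "\<bar>det B\<bar> * \<bar>det B'\<bar> = 1" using dd by (metis abs_1 abs_mult)
    moreover have "det B \<noteq> 0" using dd by auto
    ultimately show ?thesis by (simp add: field_simps)
  qed
  finally show ?thesis by (simp add: power_mult_distrib)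
qed


lemma open_slab_sets: "{x::real^'n. \<bar>x \<bullet> w\<bar> < R} \<inter> cball 0 1 \<in> sets lebesgue"
proof -
  have "open {x::real^'n. \<bar>x \<bullet> w\<bar> < R}"
    by (intro open_Collect_less continuous_intros)
  then have "{x::real^'n. \<bar>x \<bullet> w\<bar> < R} \<in> sets lebesgue" by simp
  then show ?thesis by auto
qed

lemma slab_measure:
  fixes w :: "real^'n"
  assumes "w \<noteq> 0" "R > 0"
  shows "measure lebesgue ({x. \<bar>x \<bullet> w\<bar> < R} \<inter> cball 0 1) \<le> 2 ^ CARD('n) * R / norm w"
proof -
  obtain i :: 'n where True by auto
  define u where "u = w /\<^sub>R norm w"
  define h where "h = R / norm w"
  have h0: "h > 0" using assms by (simp add: h_def)
  have nu: "norm u = 1" using assms by (simp add: u_def)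
  obtain T :: "real^'n \<Rightarrow> real^'n" where T: "orthogonal_transformation T" "T (axis i 1) = u"
    by (metis orthogonal_transformation_exists_1[OF norm_axis_1[of i] nu])
  define a :: "real^'n" where "a = (\<chi> j. if j = i then - h else -1)"
  define b :: "real^'n" where "b = (\<chi> j. if j = i then h else 1)"
  have sub: "{x. \<bar>x \<bullet> w\<bar> < R} \<inter> cball 0 1 \<subseteq> T ` cbox a b"
  proof
    fix x assume x: "x \<in> {x. \<bar>x \<bullet> w\<bar> < R} \<inter> cball 0 1"
    obtain y where y: "x = T y" using orthogonal_transformation_surj[OF T(1)] by (metis surjD)
    have ny: "norm y \<le> 1" using x y orthogonal_transformation_norm[OF T(1)] by auto
    have "y $ i = y \<bullet> axis i 1" by (simp add: inner_axis)
    also have "\<dots> = T y \<bullet> T (axis i 1)" using T(1) unfolding orthogonal_transformation_def by simp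
    also have "\<dots> = x \<bullet> w / norm w" using y T(2) by (simp add: u_def divide_inverse_commute)
    finally have "\<bar>y $ i\<bar> < h" using x assms by (simp add: h_def abs_div divide_strict_right_mono)
    moreover have "\<bar>y $ j\<bar> \<le> 1" for j using component_le_norm_cart[of y j] ny by simp
    ultimately have "y \<in> cbox a b"
      unfolding mem_box_cart a_def b_def by (auto simp: abs_le_iff abs_less_iff)
    then show "x \<in> T ` cbox a b" using y by auto
  qed
  have lin: "linear T" using T(1) by (simp add: orthogonal_transformation_linear)
  have m1: "T ` cbox a b \<in> lmeasurable"
    and m2: "measure lebesgue (T ` cbox a b) = \<bar>det (matrix T)\<bar> * measure lebesgue (cbox a b)"
    using my_measure_linear_image[OF lin, of "cbox a b"] by auto
  have ne: "cbox a b \<noteq> {}" using h0 by (auto simp: interval_ne_empty_cart a_def b_def)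
  have "measure lebesgue (cbox a b) = (\<Prod>j\<in>UNIV. b $ j - a $ j)"
    using content_cbox_cart[OF ne] by simp
  also have "\<dots> = (\<Prod>j\<in>UNIV. if j = i then 2 * h else 2)"
    by (rule prod.cong) (auto simp: a_def b_def)
  also have "\<dots> = 2 * h * (\<Prod>j\<in>UNIV - {i}. 2)"
    by (subst prod.remove[of UNIV i]) (auto intro!: prod.cong)
  also have "\<dots> = 2 * h * 2 ^ (CARD('n) - 1)"
    by (simp add: card_Diff_singleton)
  also have "\<dots> = 2 ^ CARD('n) * h"
  proof -
    have "CARD('n) = Suc (CARD('n) - 1)" using zero_less_card_finite[where 'a='n] by linarith
    then have "(2::real) ^ CARD('n) = 2 * 2 ^ (CARD('n) - 1)" by (metis power_Suc)
    then show ?thesis by simp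
  qed
  finally have mc: "measure lebesgue (cbox a b) = 2 ^ CARD('n) * h" .
  have "measure lebesgue ({x. \<bar>x \<bullet> w\<bar> < R} \<inter> cball 0 1) \<le> measure lebesgue (T ` cbox a b)"
    by (rule measure_mono_fmeasurable[OF sub open_slab_sets m1])
  also have "\<dots> = 2 ^ CARD('n) * h" using m2 mc T(1) by simp
  finally show ?thesis by (simp add: h_def)
qed


lemma dyadic_index:
  fixes y \<rho> :: real
  assumes "\<rho> / 2 ^ (K+1) \<le> y" "y < \<rho>"
  obtains k where "k \<le> K" "\<rho> / 2 ^ (k+1) \<le> y" "y < \<rho> / 2 ^ k"
proof -
  define k where "k = (LEAST k. \<rho> / 2 ^ (k+1) \<le> y)"
  have Pk: "\<rho> / 2 ^ (k+1) \<le> y" unfolding k_def by (rule LeastI[of _ K]) (rule assms(1))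
  have kK: "k \<le> K" unfolding k_def by (rule Least_le) (rule assms(1))
  have "y < \<rho> / 2 ^ k"
  proof (cases k)
    case 0 then show ?thesis using assms by simp
  next
    case (Suc j)
    have "j < k" using Suc by simp
    then have "\<not> (\<rho> / 2 ^ (j+1) \<le> y)" unfolding k_def by (rule not_less_Least)
    then show ?thesis using Suc by simp
  qed
  then show ?thesis using that kK Pk by blast
qed

lemma key_integral_bound:
  fixes g f :: "real^'n \<Rightarrow> real" and w :: "real^'n"
  assumes p: "0 < p"
    and gi: "g integrable_on cball 0 1"
    and fc: "continuous_on UNIV f"
    and gb: "\<And>x. x \<in> cball 0 1 \<Longrightarrow> g x \<le> H"
    and gf: "\<And>x. x \<in> cball 0 1 \<Longrightarrow> f x > 0 \<Longrightarrow> g x \<le> f x powr (-p)"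
    and fw: "\<And>x. \<bar>x \<bullet> w\<bar> \<le> f x"
    and m1: "\<And>r. r > 0 \<Longrightarrow> measure lebesgue ({x. f x < r} \<inter> cball 0 1) \<le> c1 * r ^ CARD('n)"
    and m2: "measure lebesgue ({x. \<bar>x \<bullet> w\<bar> < R} \<inter> cball 0 1) \<le> c2"
    and R: "R > 0" and \<rho>: "\<rho> > 0" and H: "H \<ge> 0"
  shows "integral (cball 0 1) g \<le> R powr (-p) * measure lebesgue (cball (0::real^'n) 1) + \<rho> powr (-p) * c2
      + (\<Sum>k\<le>K. (\<rho> / 2 ^ (k+1)) powr (-p) * (c1 * (\<rho> / 2 ^ k) ^ CARD('n)))
      + H * (c1 * (\<rho> / 2 ^ (K+1)) ^ CARD('n))"
proof -
  define Sw where "Sw = {x::real^'n. \<bar>x \<bullet> w\<bar> < R}"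
  define T where "T = (\<lambda>k::nat. {x. f x < \<rho> / 2 ^ k})"
  define a where "a = (\<lambda>k::nat. (\<rho> / 2 ^ (k+1)) powr (-p))"
  define G where "G = (\<lambda>x. R powr (-p) + \<rho> powr (-p) * indicator Sw x
      + (\<Sum>k\<le>K. a k * indicator (T k) x) + H * indicator (T (K+1)) x)"
  have Tm: "T k \<inter> cball 0 1 \<in> lmeasurable" for k
  proof -
    have "open (T k)" unfolding T_def by (intro open_Collect_less fc continuous_intros) auto
    then have "T k \<in> sets lebesgue" by simp
    then show ?thesis by (intro fmeasurable_Int_fmeasurable[of "cball 0 1", simplified Int_commute]) auto
  qed
  have Sm: "Sw \<inter> cball 0 1 \<in> lmeasurable"
    unfolding Sw_def by (rule fmeasurable_Int_fmeasurable[of "cball 0 1", simplified Int_commute]) (auto intro: open_slab_sets)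
  have pt: "g x \<le> G x" if x: "x \<in> cball 0 1" for x
  proof -
    have a0: "a k \<ge> 0" for k unfolding a_def by simp
    have s0: "0 \<le> (\<Sum>k\<le>K. a k * indicator (T k) x)" by (intro sum_nonneg) (simp add: a0)
    have i0: "0 \<le> \<rho> powr (-p) * indicator Sw x" "0 \<le> H * indicator (T (K+1)) x" using H by auto
    consider "f x \<ge> R" | "\<rho> \<le> f x" "f x < R" | "f x < \<rho> / 2^(K+1)" | "\<rho> / 2^(K+1) \<le> f x" "f x < \<rho>"
      by linarith
    then show ?thesis
    proof cases
      case 1
      then have "g x \<le> f x powr (-p)" using gf[OF x] R by simp
      also have "\<dots> \<le> R powr (-p)" using 1 R p by (intro powr_mono2') auto
      finally show ?thesis unfolding G_def using s0 i0 by linarith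
    next
      case 2
      then have "g x \<le> f x powr (-p)" using gf[OF x] \<rho> by simp
      also have "\<dots> \<le> \<rho> powr (-p)" using 2 \<rho> p by (intro powr_mono2') auto
      also have "\<dots> = \<rho> powr (-p) * indicator Sw x" using fw[of x] 2 by (simp add: Sw_def indicator_def)
      finally show ?thesis unfolding G_def using s0 i0 powr_ge_zero[of R "-p"] by linarith
    next
      case 3
      then have "g x \<le> H * indicator (T (K+1)) x" using gb[OF x] by (simp add: T_def indicator_def)
      then show ?thesis unfolding G_def using s0 i0 powr_ge_zero[of R "-p"] by linarith
    next
      case 4
      then obtain k where k: "k \<le> K" "\<rho> / 2 ^ (k+1) \<le> f x" "f x < \<rho> / 2 ^ k"
        by (rule dyadic_index)
      have fp: "f x > 0" using k(2) \<rho> by (smt (verit) divide_pos_pos zero_less_power)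
      have "g x \<le> f x powr (-p)" using gf[OF x fp] .
      also have "\<dots> \<le> a k" unfolding a_def using k p \<rho> by (intro powr_mono2') auto
      also have "\<dots> = a k * indicator (T k) x" using k by (simp add: T_def indicator_def)
      also have "\<dots> \<le> (\<Sum>k\<le>K. a k * indicator (T k) x)"
        using k(1) by (intro member_le_sum) (auto simp: a0)
      finally show ?thesis unfolding G_def using i0 powr_ge_zero[of R "-p"] by linarith
    qed
  qed
  have ci: "(\<lambda>x. c) integrable_on cball (0::real^'n) 1" for c :: real by (rule integrable_on_const) simp
  have ii: "(\<lambda>x. c * indicator S x) integrable_on cball (0::real^'n) 1" if "S \<inter> cball 0 1 \<in> lmeasurable" for c :: real and S
    proof -
    have "indicat_real S integrable_on cball 0 1" using that by (simp add: integrable_on_indicator)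
    then show ?thesis using integrable_cmul[of "indicat_real S" "cball 0 1" c] by simp
  qed
  have iint: "integral (cball (0::real^'n) 1) (\<lambda>x. c * indicator S x) = c * measure lebesgue (S \<inter> cball 0 1)"
    if "S \<inter> cball 0 1 \<in> lmeasurable" for c :: real and S
    using that by (simp add: integral_indicator)
  have ic: "integral (cball (0::real^'n) 1) (\<lambda>x. c) = c * measure lebesgue (cball (0::real^'n) 1)" for c :: real
  proof -
    have "integral (cball (0::real^'n) 1) (\<lambda>x. c) = integral (cball (0::real^'n) 1) (\<lambda>x. c * 1)" by simp
    also have "\<dots> = c * integral (cball (0::real^'n) 1) (\<lambda>x. 1)" by (rule integral_mult_right)
    also have "\<dots> = c * measure lebesgue (cball (0::real^'n) 1)" using lmeasure_integral[of "cball (0::real^'n) 1"] by simp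
    finally show ?thesis .
  qed
  have Gi: "G integrable_on cball 0 1"
    unfolding G_def
    by (intro integrable_add ci ii Sm Tm integrable_sum) auto
  have "integral (cball 0 1) g \<le> integral (cball 0 1) G"
    by (rule integral_le[OF gi Gi pt])
  also have "integral (cball 0 1) G = R powr (-p) * measure lebesgue (cball (0::real^'n) 1)
      + \<rho> powr (-p) * measure lebesgue (Sw \<inter> cball 0 1)
      + (\<Sum>k\<le>K. a k * measure lebesgue (T k \<inter> cball 0 1))
      + H * measure lebesgue (T (K+1) \<inter> cball 0 1)"
    unfolding G_def
    by (subst integral_add, (intro integrable_add ci ii Sm Tm integrable_sum; auto)+,
        subst integral_add, (intro integrable_add ci ii Sm Tm integrable_sum; auto)+,
        subst integral_add, (intro integrable_add ci ii Sm Tm integrable_sum; auto)+,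
        subst integral_sum, (auto intro: ii Tm)[2])
       (simp add: integral_indicator Sm Tm ic)
  also have "\<dots> \<le> R powr (-p) * measure lebesgue (cball (0::real^'n) 1) + \<rho> powr (-p) * c2
      + (\<Sum>k\<le>K. a k * (c1 * (\<rho> / 2 ^ k) ^ CARD('n)))
      + H * (c1 * (\<rho> / 2 ^ (K+1)) ^ CARD('n))"
  proof -
    have "\<rho> powr (-p) * measure lebesgue (Sw \<inter> cball 0 1) \<le> \<rho> powr (-p) * c2"
      using m2 by (intro mult_left_mono) (auto simp: Sw_def)
    moreover have "(\<Sum>k\<le>K. a k * measure lebesgue (T k \<inter> cball 0 1)) \<le> (\<Sum>k\<le>K. a k * (c1 * (\<rho> / 2 ^ k) ^ CARD('n)))"
      using m1 \<rho> by (intro sum_mono mult_left_mono) (auto simp: T_def a_def)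
    moreover have "H * measure lebesgue (T (K+1) \<inter> cball 0 1) \<le> H * (c1 * (\<rho> / 2 ^ (K+1)) ^ CARD('n))"
      using m1 \<rho> H by (intro mult_left_mono) (auto simp: T_def)
    ultimately show ?thesis by linarith
  qed
  finally show ?thesis unfolding a_def .
qed



lemma dyadic_term:
  fixes \<rho> p :: real and N k :: nat
  assumes "\<rho> > 0"
  shows "(\<rho> / 2 ^ (k+1)) powr (-p) * (c1 * (\<rho> / 2 ^ k) ^ N)
       = c1 * 2 powr p * \<rho> powr (real N - p) * (2 powr (p - real N)) ^ k"
proof -
  define r where "r = \<rho> / 2 ^ k"
  have r0: "r > 0" using assms by (simp add: r_def)
  have "\<rho> / 2 ^ (k+1) = r / 2" by (simp add: r_def)
  then have "(\<rho> / 2 ^ (k+1)) powr (-p) = 2 powr p * r powr (-p)"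
    using r0 by (simp add: powr_divide powr_minus_divide divide_simps)
  moreover have "(\<rho> / 2 ^ k) ^ N = r powr real N" using r0 by (simp add: r_def powr_realpow)
  moreover have "r powr (-p) * r powr real N = r powr (real N - p)" using r0 by (simp add: powr_add[symmetric])
  moreover have "r powr (real N - p) = \<rho> powr (real N - p) * (2 powr (p - real N)) ^ k"
  proof -
    have "r powr (real N - p) = \<rho> powr (real N - p) / (2 ^ k) powr (real N - p)"
      using assms by (simp add: r_def powr_divide)
    also have "(2::real) ^ k = 2 powr (real k)" by (simp add: powr_realpow)
    also have "(2 powr real k) powr (real N - p) = 2 powr (real k * (real N - p))" by (simp add: powr_powr)
    also have "\<rho> powr (real N - p) / 2 powr (real k * (real N - p)) = \<rho> powr (real N - p) * 2 powr ((p - real N) * real k)"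
    proof -
      have "\<rho> powr (real N - p) / 2 powr (real k * (real N - p)) = \<rho> powr (real N - p) * 2 powr (- (real k * (real N - p)))"
        by (simp add: powr_minus divide_inverse)
      also have "- (real k * (real N - p)) = (p - real N) * real k" by (simp add: algebra_simps)
      finally show ?thesis .
    qed
    also have "2 powr ((p - real N) * real k) = (2 powr (p - real N)) ^ k"
      by (simp add: powr_powr[symmetric] powr_realpow)
    finally show ?thesis .
  qed
  ultimately show ?thesis by (simp add: algebra_simps)
qed

lemma dyadic_sum_bound:
  fixes \<rho> p c1 :: real and N :: nat
  assumes "0 < p" "p < real N" "\<rho> > 0" "c1 \<ge> 0"
  shows "(\<Sum>k\<le>K. (\<rho> / 2 ^ (k+1)) powr (-p) * (c1 * (\<rho> / 2 ^ k) ^ N))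
        \<le> c1 * 2 powr p * \<rho> powr (real N - p) / (1 - 2 powr (p - real N))"
proof -
  define \<theta> where "\<theta> = (2::real) powr (p - real N)"
  have "(2::real) powr (p - real N) < 2 powr 0" using assms by (intro powr_less_mono) auto
  then have th: "0 < \<theta>" "\<theta> < 1" by (auto simp: \<theta>_def)
  define C where "C = c1 * 2 powr p * \<rho> powr (real N - p)"
  have C0: "C \<ge> 0" using assms by (simp add: C_def)
  have "(\<Sum>k\<le>K. (\<rho> / 2 ^ (k+1)) powr (-p) * (c1 * (\<rho> / 2 ^ k) ^ N)) = C * (\<Sum>k\<le>K. \<theta> ^ k)"
    unfolding sum_distrib_left C_def \<theta>_def using dyadic_term[OF assms(3)] by (intro sum.cong) auto
  also have "(\<Sum>k\<le>K. \<theta> ^ k) = (1 - \<theta> ^ Suc K) / (1 - \<theta>)"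
  proof -
    have "(\<Sum>k\<le>K. \<theta> ^ k) = (\<Sum>k<Suc K. \<theta> ^ k)" by (simp add: lessThan_Suc_atMost)
    also have "\<dots> = (\<theta> ^ Suc K - 1) / (\<theta> - 1)" using th by (intro geometric_sum) auto
    also have "\<dots> = (1 - \<theta> ^ Suc K) / (1 - \<theta>)" using th by (simp add: field_simps)
    finally show ?thesis .
  qed
  also have "C * ((1 - \<theta> ^ Suc K) / (1 - \<theta>)) \<le> C * (1 / (1 - \<theta>))"
    using th C0 by (intro mult_left_mono divide_right_mono) auto
  finally show ?thesis by (simp add: C_def \<theta>_def)
qed



lemma meas_test:
  fixes B :: "real^'n^'n"
  shows "(\<lambda>x::real^'n. norm (B *v (x /\<^sub>R norm x)) powr (-p)) \<in> borel_measurable lebesgue"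
    and "(\<lambda>x::real^'n. ln (norm (B *v (x /\<^sub>R norm x)))) \<in> borel_measurable lebesgue"
proof -
  have c: "continuous_on UNIV (\<lambda>x::real^'n. B *v x)" by (intro linear_continuous_on) (simp add: linear_linear)
  have "(\<lambda>x::real^'n. B *v x) \<in> borel_measurable borel" using c by (rule borel_measurable_continuous_onI)
  then have "(\<lambda>x::real^'n. norm (B *v (x /\<^sub>R norm x))) \<in> borel_measurable borel"
    by measurable
  then have m: "(\<lambda>x::real^'n. norm (B *v (x /\<^sub>R norm x))) \<in> borel_measurable lebesgue"
    using measurable_compose[OF id_borel_measurable_lebesgue] by (simp add: o_def)
  show "(\<lambda>x::real^'n. norm (B *v (x /\<^sub>R norm x)) powr (-p)) \<in> borel_measurable lebesgue"
    using m by measurable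
  show "(\<lambda>x::real^'n. ln (norm (B *v (x /\<^sub>R norm x)))) \<in> borel_measurable lebesgue"
    using m by measurable
qed


lemma bounded_meas_integrable:
  fixes f :: "real^'n \<Rightarrow> real"
  assumes "f \<in> borel_measurable lebesgue" "\<And>x. x \<in> cball 0 1 \<Longrightarrow> \<bar>f x\<bar> \<le> C"
  shows "f integrable_on cball (0::real^'n) 1"
proof (rule measurable_bounded_by_integrable_imp_integrable_real)
  show "f \<in> borel_measurable (lebesgue_on (cball 0 1))"
    using assms(1) by (rule measurable_restrict_space1)
  show "(\<lambda>x. C) integrable_on cball (0::real^'n) 1" by (rule integrable_on_const) simp
qed (use assms in auto)

lemma transpose_invertible:
  fixes A :: "real^'n^'n"
  assumes "invertible A"
  obtains B' where "transpose A ** B' = mat 1" "B' ** transpose A = mat 1" "invertible (transpose A)"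
proof -
  obtain A' where AA: "A ** A' = mat 1" "A' ** A = mat 1" using assms unfolding invertible_def by auto
  have 1: "transpose A ** transpose A' = mat 1" using AA(2) by (metis matrix_transpose_mul transpose_mat)
  have 2: "transpose A' ** transpose A = mat 1" using AA(1) by (metis matrix_transpose_mul transpose_mat)
  show ?thesis using 1 2 that unfolding invertible_def by blast
qed

lemma per_matrix_bound:
  fixes A :: "real^'n^'n" and v :: "real^'n"
  assumes inv: "invertible A" and p: "0 < p" "p < real CARD('n)"
    and v: "norm v \<le> 1" and wv: "A *v v \<noteq> 0"
    and R: "R > 0" and \<rho>: "0 < \<rho>" "\<rho> \<le> 1" and e: "e > 0"
  shows "integral (cball 0 1) (\<lambda>x. norm (transpose A *v (x /\<^sub>R norm x)) powr (-p))
     \<le> R powr (-p) * measure lebesgue (cball (0::real^'n) 1) + \<rho> powr (-p) * (2 ^ CARD('n) * R / norm (A *v v))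
       + 2 ^ CARD('n) / \<bar>det A\<bar> * 2 powr p * \<rho> powr (real CARD('n) - p) / (1 - 2 powr (p - real CARD('n))) + e"
proof -
  define B where "B = transpose A"
  define N where "N = CARD('n)"
  define w where "w = A *v v"
  define f where "f = (\<lambda>x. norm (B *v x))"
  define g where "g = (\<lambda>x::real^'n. norm (B *v (x /\<^sub>R norm x)) powr (-p))"
  define c1 where "c1 = 2 ^ N / \<bar>det A\<bar>"
  obtain B' where BB: "B ** B' = mat 1" "B' ** B = mat 1" and Binv: "invertible B"
    using transpose_invertible[OF inv] unfolding B_def by metis
  have detB: "det B = det A" by (simp add: B_def)
  have dA: "det A \<noteq> 0" using inv by (simp add: invertible_det_nz)
  obtain K' where K': "K' > 0" "\<And>y. norm (B' *v y) \<le> K' * norm y"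
    using linear_bounded_pos[of "\<lambda>y. B' *v y"] by auto
  have low: "norm z \<le> K' * norm (B *v z)" for z
  proof -
    have "z = B' *v (B *v z)" using BB(2) by (simp add: matrix_vector_mul_assoc)
    then show ?thesis using K'(2)[of "B *v z"] by simp
  qed
  define H where "H = K' powr p"
  have H0: "H \<ge> 0" by (simp add: H_def)
  have hlow: "norm (B *v (x /\<^sub>R norm x)) \<ge> 1 / K'" if "x \<noteq> 0" for x
    using low[of "x /\<^sub>R norm x"] K' that by (simp add: field_simps)
  have gb: "g x \<le> H" for x
  proof (cases "x = 0")
    case True then show ?thesis by (simp add: g_def H0)
  next
    case False
    have "g x \<le> (1 / K') powr (-p)" unfolding g_def using hlow[OF False] K' p by (intro powr_mono2') auto
    also have "\<dots> = H" using K' by (simp add: H_def powr_minus_divide powr_divide)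
    finally show ?thesis .
  qed
  have g0: "g x \<ge> 0" for x by (simp add: g_def)
  have gm: "g \<in> borel_measurable lebesgue" unfolding g_def by (rule meas_test(1))
  have gi: "g integrable_on cball 0 1"
    by (rule bounded_meas_integrable[OF gm, of H]) (use gb g0 in auto)
  have fc: "continuous_on UNIV f" unfolding f_def
    by (intro continuous_intros linear_continuous_on) (simp add: linear_linear)
  have gf: "g x \<le> f x powr (-p)" if x: "x \<in> cball 0 1" and fp: "f x > 0" for x
  proof -
    have x0: "x \<noteq> 0" using fp by (auto simp: f_def)
    have nx: "0 < norm x" "norm x \<le> 1" using x0 x by auto
    have "norm (B *v (x /\<^sub>R norm x)) = f x / norm x"
      by (simp add: f_def matrix_vector_mult_scaleR divide_inverse_commute)
    also have "\<dots> \<ge> f x" using nx fp by (simp add: le_divide_eq)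
    finally have "f x \<le> norm (B *v (x /\<^sub>R norm x))" .
    then show ?thesis unfolding g_def using fp p by (intro powr_mono2') auto
  qed
  have fw: "\<bar>x \<bullet> w\<bar> \<le> f x" for x
  proof -
    have "x \<bullet> w = (B *v x) \<bullet> v" by (simp add: w_def B_def dot_lmul_matrix)
    then have "\<bar>x \<bullet> w\<bar> \<le> norm (B *v x) * norm v" using Cauchy_Schwarz_ineq2 by simp
    also have "\<dots> \<le> norm (B *v x)" using v by (simp add: mult_left_le)
    finally show ?thesis by (simp add: f_def)
  qed
  have m1: "measure lebesgue ({x. f x < r} \<inter> cball 0 1) \<le> c1 * r ^ CARD('n)" if "r > 0" for r
    using measure_preimage_ball[OF Binv that] unfolding f_def c1_def N_def detB by simp
  have m2: "measure lebesgue ({x. \<bar>x \<bullet> w\<bar> < R} \<inter> cball 0 1) \<le> 2 ^ CARD('n) * R / norm w"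
    using slab_measure[of w R] wv R by (simp add: w_def)
  obtain K :: nat where K: "H * c1 / e < real K" using reals_Archimedean2 by blast
  have c10: "c1 \<ge> 0" by (simp add: c1_def)
  have last: "H * (c1 * (\<rho> / 2 ^ (K+1)) ^ CARD('n)) \<le> e"
  proof -
    have N1: "1 \<le> CARD('n)" by (simp add: Suc_leI)
    have "(1::real) \<le> 2 ^ K" by simp
    then have r2: "\<rho> \<le> 2 * 2 ^ K" using \<rho> by linarith
    have "(\<rho> / 2 ^ (K+1)) ^ CARD('n) \<le> (\<rho> / 2 ^ (K+1)) ^ 1"
      by (intro power_decreasing N1) (use \<rho> r2 in \<open>auto simp: divide_le_eq_1\<close>)
    also have "\<dots> \<le> 1 / 2 ^ (K+1)" using \<rho> by (simp add: divide_right_mono)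
    finally have a: "(\<rho> / 2 ^ (K+1)) ^ CARD('n) \<le> 1 / 2 ^ (K+1)" .
    have "H * (c1 * (\<rho> / 2 ^ (K+1)) ^ CARD('n)) \<le> H * c1 * (1 / 2 ^ (K+1))"
      using mult_left_mono[OF a, of "H * c1"] H0 c10 by (simp add: mult.assoc)
    also have "\<dots> \<le> e"
    proof -
      have "H * c1 < e * real K" using K e by (simp add: divide_less_eq mult.commute)
      also have "real K \<le> 2 ^ (K+1)"
      proof -
        have "K < 2 ^ (K+1)" using less_exp[of "K+1"] by simp
        then have "real K < real (2 ^ (K+1))" by linarith
        then show ?thesis by simp
      qed
      then have "e * real K \<le> e * 2 ^ (K+1)" using e by simp
      finally show ?thesis by (simp add: divide_le_eq)
    qed
    finally show ?thesis .
  qed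
  have "integral (cball 0 1) g \<le> R powr (-p) * measure lebesgue (cball (0::real^'n) 1) + \<rho> powr (-p) * (2 ^ CARD('n) * R / norm w)
      + (\<Sum>k\<le>K. (\<rho> / 2 ^ (k+1)) powr (-p) * (c1 * (\<rho> / 2 ^ k) ^ CARD('n)))
      + H * (c1 * (\<rho> / 2 ^ (K+1)) ^ CARD('n))"
    by (rule key_integral_bound[OF p(1) gi fc _ gf fw m1 m2 R \<rho>(1) H0]) (use gb in auto)
  also have "(\<Sum>k\<le>K. (\<rho> / 2 ^ (k+1)) powr (-p) * (c1 * (\<rho> / 2 ^ k) ^ CARD('n)))
      \<le> c1 * 2 powr p * \<rho> powr (real CARD('n) - p) / (1 - 2 powr (p - real CARD('n)))"
    by (rule dyadic_sum_bound[OF p \<rho>(1) c10])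
  finally show ?thesis using last unfolding g_def c1_def N_def w_def B_def by simp
qed



lemma integral_tendsto_zero:
  fixes A :: "'i \<Rightarrow> real^'n^'n"
  assumes inv: "\<And>t. invertible (A t)" and det: "\<And>t. \<bar>det (A t)\<bar> = D"
    and p: "0 < p" "p < real CARD('n)"
    and M: "filterlim (\<lambda>t. Sup (norm ` (\<lambda>x. A t *v x) ` cball 0 1)) at_top F"
  shows "((\<lambda>t. integral (cball 0 1) (\<lambda>x. norm (transpose (A t) *v (x /\<^sub>R norm x)) powr (-p))) \<longlongrightarrow> 0) F"
proof (rule order_tendstoI)
  let ?I = "\<lambda>t. integral (cball 0 1) (\<lambda>x::real^'n. norm (transpose (A t) *v (x /\<^sub>R norm x)) powr (-p))"
  have I0: "?I t \<ge> 0" for t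
  proof (cases "(\<lambda>x::real^'n. norm (transpose (A t) *v (x /\<^sub>R norm x)) powr (-p)) integrable_on cball 0 1")
    case True then show ?thesis by (rule integral_nonneg) auto
  next
    case False then show ?thesis by (simp add: not_integrable_integral)
  qed
  fix a :: real assume "a < 0"
  then show "\<forall>\<^sub>F t in F. a < ?I t" using I0 by (auto intro: always_eventually less_le_trans)
next
  let ?I = "\<lambda>t. integral (cball 0 1) (\<lambda>x::real^'n. norm (transpose (A t) *v (x /\<^sub>R norm x)) powr (-p))"
  fix \<epsilon> :: real assume \<epsilon>: "0 < \<epsilon>"
  define N where "N = CARD('n)"
  have D0: "D > 0" using inv[of undefined] det[of undefined] by (auto simp: invertible_det_nz)
  define \<omega> where "\<omega> = measure lebesgue (cball (0::real^'n) 1)"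
  have \<omega>0: "\<omega> \<ge> 0" by (simp add: \<omega>_def)
  define R where "R = (8 * (\<omega> + 1) / \<epsilon>) powr (1 / p)"
  have R0: "R > 0" using \<omega>0 \<epsilon> by (simp add: R_def)
  have "R powr (-p) = (8 * (\<omega> + 1) / \<epsilon>) powr (- 1)"
    unfolding R_def using p by (simp add: powr_powr)
  also have "\<dots> = \<epsilon> / (8 * (\<omega> + 1))" using \<omega>0 \<epsilon> by (simp add: powr_minus_divide)
  finally have Rp: "R powr (-p) = \<epsilon> / (8 * (\<omega> + 1))" .
  have t1: "R powr (-p) * \<omega> < \<epsilon> / 4"
  proof -
    have "R powr (-p) * \<omega> \<le> R powr (-p) * (\<omega> + 1)" by (simp add: mult_left_mono)
    also have "\<dots> = \<epsilon> / 8" using Rp \<omega>0 by (simp add: field_simps)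
    finally show ?thesis using \<epsilon> by simp
  qed
  define \<theta> where "\<theta> = (2::real) powr (p - real N)"
  have "(2::real) powr (p - real N) < 2 powr 0" using p by (intro powr_less_mono) (auto simp: N_def)
  then have th: "\<theta> < 1" "0 < \<theta>" by (auto simp: \<theta>_def)
  define C1 where "C1 = 2 ^ N / D * 2 powr p / (1 - \<theta>)"
  have C10: "C1 > 0" using D0 th by (simp add: C1_def)
  define \<rho> where "\<rho> = min 1 ((\<epsilon> / (4 * C1)) powr (1 / (real N - p)))"
  have Np: "real N - p > 0" using p by (simp add: N_def)
  have \<rho>0: "0 < \<rho>" "\<rho> \<le> 1" using \<epsilon> C10 by (auto simp: \<rho>_def)
  have t3: "C1 * \<rho> powr (real N - p) \<le> \<epsilon> / 4"
  proof -
    have "\<rho> powr (real N - p) \<le> ((\<epsilon> / (4 * C1)) powr (1 / (real N - p))) powr (real N - p)"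
      using \<rho>0 Np by (intro powr_mono2) (auto simp: \<rho>_def)
    also have "\<dots> = \<epsilon> / (4 * C1)" using Np \<epsilon> C10 by (simp add: powr_powr)
    finally show ?thesis using C10 by (simp add: field_simps)
  qed
  define M0 where "M0 = max 1 (8 * \<rho> powr (-p) * 2 ^ N * R / \<epsilon>)"
  have ev: "\<forall>\<^sub>F t in F. Sup (norm ` (\<lambda>x. A t *v x) ` cball 0 1) > M0"
    using M by (simp add: filterlim_at_top_dense)
  show "\<forall>\<^sub>F t in F. ?I t < \<epsilon>"
    using ev
  proof eventually_elim
    case (elim t)
    define Mt where "Mt = Sup (norm ` (\<lambda>x. A t *v x) ` cball (0::real^'n) 1)"
    have Mt: "Mt > M0" using elim by (simp add: Mt_def)
    have M01: "M0 \<ge> 1" by (simp add: M0_def)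
    have bdd: "bdd_above (norm ` (\<lambda>x. A t *v x) ` cball (0::real^'n) 1)"
    proof -
      have "compact ((\<lambda>x. A t *v x) ` cball (0::real^'n) 1)"
        by (intro compact_continuous_image linear_continuous_on compact_cball) (simp add: linear_linear)
      then have "compact (norm ` (\<lambda>x. A t *v x) ` cball (0::real^'n) 1)"
        by (metis compact_continuous_image continuous_on_norm_id)
      then show ?thesis by (intro bounded_imp_bdd_above compact_imp_bounded)
    qed
    have "Mt / 2 < Mt" using Mt M01 by simp
    then obtain v where v: "v \<in> cball (0::real^'n) 1" "norm (A t *v v) > Mt / 2"
      using less_cSup_iff[OF _ bdd, of "Mt/2"] unfolding Mt_def by auto
    have wv: "A t *v v \<noteq> 0" using v Mt M01 by auto
    have b1: "?I t \<le> R powr (-p) * \<omega> + \<rho> powr (-p) * (2 ^ CARD('n) * R / norm (A t *v v))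
       + 2 ^ CARD('n) / \<bar>det (A t)\<bar> * 2 powr p * \<rho> powr (real CARD('n) - p) / (1 - 2 powr (p - real CARD('n))) + \<epsilon> / 8"
      unfolding \<omega>_def
      by (rule per_matrix_bound[OF inv p _ wv R0 \<rho>0]) (use v \<epsilon> in auto)
    have b3: "2 ^ CARD('n) / \<bar>det (A t)\<bar> * 2 powr p * \<rho> powr (real CARD('n) - p) / (1 - 2 powr (p - real CARD('n)))
        = C1 * \<rho> powr (real N - p)"
      by (simp add: C1_def det N_def \<theta>_def)
    have b2: "\<rho> powr (-p) * (2 ^ CARD('n) * R / norm (A t *v v)) < \<epsilon> / 4"
    proof -
      have pos: "\<rho> powr (-p) * 2 ^ N * R > 0" using \<rho>0 R0 by simp
      have nw: "norm (A t *v v) > Mt / 2" using v by simp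
      have "\<rho> powr (-p) * (2 ^ CARD('n) * R / norm (A t *v v)) = (\<rho> powr (-p) * 2 ^ N * R) / norm (A t *v v)"
        by (simp add: N_def)
      also have "\<dots> < (\<rho> powr (-p) * 2 ^ N * R) / (Mt / 2)"
        using pos nw Mt M01 by (intro divide_strict_left_mono) (auto intro!: mult_pos_pos)
      also have "\<dots> \<le> (\<rho> powr (-p) * 2 ^ N * R) / (M0 / 2)"
        using pos Mt M01 by (intro divide_left_mono) auto
      also have "\<dots> \<le> \<epsilon> / 4"
      proof -
        have "8 * \<rho> powr (-p) * 2 ^ N * R / \<epsilon> \<le> M0" by (simp add: M0_def)
        then have "8 * \<rho> powr (-p) * 2 ^ N * R \<le> M0 * \<epsilon>" using \<epsilon> by (simp add: divide_le_eq)
        then show ?thesis using M01 \<epsilon> by (simp add: divide_le_eq field_simps)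
      qed
      finally show ?thesis .
    qed
    show ?case using b1 b2 b3 t1 t3 \<epsilon> by linarith
  qed
qed



lemma int_const_cball: "integral (cball (0::real^'n) 1) (\<lambda>x. c) = c * measure lebesgue (cball (0::real^'n) 1)"
proof -
  have "integral (cball (0::real^'n) 1) (\<lambda>x. c) = integral (cball (0::real^'n) 1) (\<lambda>x. c * 1)" by simp
  also have "\<dots> = c * integral (cball (0::real^'n) 1) (\<lambda>x. 1)" by (rule integral_mult_right)
  also have "\<dots> = c * measure lebesgue (cball (0::real^'n) 1)" using lmeasure_integral[of "cball (0::real^'n) 1"] by simp
  finally show ?thesis .
qed

lemma omega_pos: "measure lebesgue (cball (0::real^'n) 1) > 0"
proof -
  have "measure lebesgue (ball (0::real^'n) 1) \<le> measure lebesgue (cball (0::real^'n) 1)"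
    by (rule measure_mono_fmeasurable) auto
  moreover have "measure lebesgue (ball (0::real^'n) 1) > 0"
    using content_ball_pos[of 1 "0::real^'n"] by simp
  ultimately show ?thesis by linarith
qed

lemma h_bounds:
  fixes A :: "real^'n^'n"
  assumes "invertible A"
  obtains lo hi where "0 < lo" "\<And>x. x \<noteq> 0 \<Longrightarrow> lo \<le> norm (transpose A *v (x /\<^sub>R norm x))"
    "\<And>x. x \<noteq> 0 \<Longrightarrow> norm (transpose A *v (x /\<^sub>R norm x)) \<le> hi"
proof -
  define B where "B = transpose A"
  obtain B' where BB: "B ** B' = mat 1" "B' ** B = mat 1"
    using transpose_invertible[OF assms] unfolding B_def by metis
  obtain K' where K': "K' > 0" "\<And>y. norm (B' *v y) \<le> K' * norm y"
    using linear_bounded_pos[of "\<lambda>y. B' *v y"] by auto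
  obtain K where K: "K > 0" "\<And>y. norm (B *v y) \<le> K * norm y"
    using linear_bounded_pos[of "\<lambda>y. B *v y"] by auto
  have low: "norm z \<le> K' * norm (B *v z)" for z
  proof -
    have "z = B' *v (B *v z)" using BB(2) by (simp add: matrix_vector_mul_assoc)
    then show ?thesis using K'(2)[of "B *v z"] by simp
  qed
  have "1 / K' \<le> norm (B *v (x /\<^sub>R norm x))" if "x \<noteq> 0" for x
    using low[of "x /\<^sub>R norm x"] K' that by (simp add: field_simps)
  moreover have "norm (B *v (x /\<^sub>R norm x)) \<le> K" if "x \<noteq> 0" for x
    using K(2)[of "x /\<^sub>R norm x"] that by simp
  ultimately show ?thesis using that[of "1/K'" K] K' unfolding B_def by auto
qed

lemma I_pos:
  fixes A :: "real^'n^'n"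
  assumes "invertible A"
  shows "0 < integral (cball 0 1) (\<lambda>x::real^'n. norm (transpose A *v (x /\<^sub>R norm x)) powr (-p))"
proof -
  obtain lo hi where lh: "0 < lo" "\<And>x. x \<noteq> 0 \<Longrightarrow> lo \<le> norm (transpose A *v (x /\<^sub>R norm x))"
    "\<And>x. x \<noteq> 0 \<Longrightarrow> norm (transpose A *v (x /\<^sub>R norm x)) \<le> hi"
    using h_bounds[OF assms] by blast
  define g where "g = (\<lambda>x::real^'n. norm (transpose A *v (x /\<^sub>R norm x)) powr (-p))"
  define c where "c = min (lo powr (-p)) (hi powr (-p))"
  have ax: "axis undefined (1::real) \<noteq> (0::real^'n)" by (simp add: axis_eq_0_iff)
  have hi0: "hi > 0" using lh(1) lh(2)[OF ax] lh(3)[OF ax] by linarith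
  have c0: "c > 0" using lh hi0 by (simp add: c_def)
  have hp: "0 < norm (transpose A *v (x /\<^sub>R norm x))" if "x \<noteq> 0" for x
    using lh(1) lh(2)[OF that] by linarith
  have gc: "c \<le> g x" if "x \<noteq> 0" for x
  proof (cases "p \<ge> 0")
    case True
    then have "hi powr (-p) \<le> g x" unfolding g_def using lh that hp[OF that] by (intro powr_mono2') auto
    then show ?thesis by (simp add: c_def)
  next
    case False
    then have "lo powr (-p) \<le> g x" unfolding g_def using lh that hp[OF that] by (intro powr_mono2) auto
    then show ?thesis by (simp add: c_def)
  qed
  have gb: "\<bar>g x\<bar> \<le> max (lo powr (-p)) (hi powr (-p))" for x
  proof (cases "x = 0")
    case True then show ?thesis by (simp add: g_def le_max_iff_disj)
  next
    case False
    show ?thesis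
    proof (cases "p \<ge> 0")
      case True
      then have "g x \<le> lo powr (-p)" unfolding g_def using lh False hp[OF False] by (intro powr_mono2') auto
      then show ?thesis by (simp add: g_def)
    next
      case F: False
      then have "g x \<le> hi powr (-p)" unfolding g_def using lh False hp[OF False] by (intro powr_mono2) auto
      then show ?thesis by (simp add: g_def)
    qed
  qed
  have gi: "g integrable_on cball 0 1"
    by (rule bounded_meas_integrable[OF meas_test(1)[of "transpose A" p, folded g_def]]) (use gb in auto)
  define g2 where "g2 = (\<lambda>x. if x = 0 then c else g x)"
  have eq: "integral (cball 0 1) g = integral (cball 0 1) g2"
    by (rule integral_spike[of "{0}"]) (auto simp: g2_def)
  have g2i: "g2 integrable_on cball 0 1"
    by (rule integrable_spike[OF gi, of "{0}"]) (auto simp: g2_def)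
  have "c * measure lebesgue (cball (0::real^'n) 1) = integral (cball 0 1) (\<lambda>x::real^'n. c)"
    by (simp only: int_const_cball)
  also have "\<dots> \<le> integral (cball 0 1) g2"
    by (rule integral_le[OF integrable_on_const g2i]) (auto simp: g2_def gc)
  finally have "c * measure lebesgue (cball (0::real^'n) 1) \<le> integral (cball 0 1) g" using eq by simp
  moreover have "c * measure lebesgue (cball (0::real^'n) 1) > 0" using c0 omega_pos by simp
  ultimately show ?thesis unfolding g_def by linarith
qed


lemma log_lower:
  fixes A :: "real^'n^'n"
  assumes inv: "invertible A" and q: "q > 0" and l: "l > 0"
  shows "(ln l + 1 / q) * measure lebesgue (cball (0::real^'n) 1)
     - l powr q / q * integral (cball 0 1) (\<lambda>x::real^'n. norm (transpose A *v (x /\<^sub>R norm x)) powr (-q))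
     \<le> integral (cball 0 1) (\<lambda>x::real^'n. ln (norm (transpose A *v (x /\<^sub>R norm x))))"
proof -
  obtain lo hi where lh: "0 < lo" "\<And>x. x \<noteq> 0 \<Longrightarrow> lo \<le> norm (transpose A *v (x /\<^sub>R norm x))"
    "\<And>x. x \<noteq> 0 \<Longrightarrow> norm (transpose A *v (x /\<^sub>R norm x)) \<le> hi"
    using h_bounds[OF inv] by blast
  define h where "h = (\<lambda>x::real^'n. norm (transpose A *v (x /\<^sub>R norm x)))"
  define g where "g = (\<lambda>x::real^'n. h x powr (-q))"
  define f where "f = (\<lambda>x::real^'n. ln (h x))"
  have hp: "0 < h x" if "x \<noteq> 0" for x
    using lh(1) lh(2)[OF that] unfolding h_def by linarith
  have gb: "\<bar>g x\<bar> \<le> lo powr (-q)" for x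
  proof (cases "x = 0")
    case True then show ?thesis by (simp add: g_def h_def)
  next
    case False
    have "g x \<le> lo powr (-q)" unfolding g_def using lh False hp[OF False] q by (intro powr_mono2') (auto simp: h_def)
    then show ?thesis by (simp add: g_def)
  qed
  have gi: "g integrable_on cball 0 1"
  proof (rule bounded_meas_integrable)
    show "g \<in> borel_measurable lebesgue" unfolding g_def h_def by (rule meas_test(1))
  qed (use gb in auto)
  have fb: "\<bar>f x\<bar> \<le> max \<bar>ln lo\<bar> \<bar>ln hi\<bar>" for x
  proof (cases "x = 0")
    case True then show ?thesis by (simp add: f_def h_def le_max_iff_disj)
  next
    case False
    have "ln lo \<le> f x" "f x \<le> ln hi" unfolding f_def using lh(1) lh(2)[OF False] lh(3)[OF False] hp[OF False]
      by (auto simp: h_def intro!: ln_mono)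
    then show ?thesis by (auto simp: abs_le_iff le_max_iff_disj)
  qed
  have fi: "f integrable_on cball 0 1"
  proof (rule bounded_meas_integrable)
    show "f \<in> borel_measurable lebesgue" unfolding f_def h_def by (rule meas_test(2))
  qed (use fb in auto)
  define \<phi> where "\<phi> = (\<lambda>x. (ln l + 1 / q) - l powr q / q * g x)"
  have gci: "(\<lambda>x. l powr q / q * g x) integrable_on cball 0 1"
    using integrable_cmul[OF gi, of "l powr q / q"] by (simp only: real_scaleR_def)
  have \<phi>i: "\<phi> integrable_on cball 0 1"
    unfolding \<phi>_def by (intro integrable_diff integrable_on_const gci) auto
  have pt: "\<phi> x \<le> f x" if "x \<noteq> 0" for x
  proof -
    define y where "y = h x"
    have y0: "y > 0" using hp[OF that] by (simp add: y_def)
    define s where "s = l powr q * y powr (-q)"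
    have s0: "s > 0" using l y0 by (simp add: s_def)
    have "ln s = q * ln l - q * ln y" using l y0 by (simp add: s_def ln_mult ln_powr)
    moreover have "ln s \<le> s - 1" using s0 by (rule ln_le_minus_one)
    ultimately have "q * ln l - q * ln y \<le> s - 1" by simp
    then have h1: "1 + q * ln l \<le> s + q * ln y" by linarith
    have "(1 + q * ln l) / q \<le> (s + q * ln y) / q" using h1 q by (intro divide_right_mono) auto
    then have "ln l + 1 / q - s / q \<le> ln y" using q by (simp add: add_divide_distrib)
    then show ?thesis by (simp add: \<phi>_def f_def g_def s_def y_def)
  qed
  define f2 where "f2 = (\<lambda>x. if x = 0 then \<phi> 0 else f x)"
  have eq: "integral (cball 0 1) f = integral (cball 0 1) f2"
    by (rule integral_spike[of "{0}"]) (auto simp: f2_def)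
  have f2i: "f2 integrable_on cball 0 1"
    by (rule integrable_spike[OF fi, of "{0}"]) (auto simp: f2_def)
  have "integral (cball 0 1) \<phi> \<le> integral (cball 0 1) f2"
    by (rule integral_le[OF \<phi>i f2i]) (auto simp: f2_def pt)
  moreover have "integral (cball 0 1) \<phi> = (ln l + 1 / q) * measure lebesgue (cball (0::real^'n) 1) - l powr q / q * integral (cball 0 1) g"
  proof -
    have "integral (cball 0 1) \<phi> = integral (cball 0 1) (\<lambda>x::real^'n. ln l + 1/q) - integral (cball 0 1) (\<lambda>x. l powr q / q * g x)"
      unfolding \<phi>_def by (rule integral_diff[OF integrable_on_const gci]) simp
    then show ?thesis by (simp only: int_const_cball integral_mult_right)
  qed
  ultimately show ?thesis using eq unfolding f_def g_def h_def by simp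
qed



theorem lemma4p6:
  fixes E :: "'i \<Rightarrow> (real^'n) set" and F :: "'i filter" and \<alpha> V :: real
  assumes "CARD('n) \<ge> 2"
    and "1 / (real CARD('n) - 1) < \<alpha>" and "\<alpha> \<le> 1"
    and "\<And>t. origin_ellipsoid (E t)"
    and "\<And>t. measure lebesgue (E t) = V"
    and "filterlim (\<lambda>t. r_max (E t)) at_top F"
  shows "filterlim (\<lambda>t. integral_quantity \<alpha> (E t)) at_top F"
proof -
  have "\<forall>t. \<exists>A :: real^'n^'n. invertible A \<and> E t = (\<lambda>x. A *v x) ` cball 0 1"
    using assms(4) unfolding origin_ellipsoid_def by blast
  then obtain A :: "'i \<Rightarrow> real^'n^'n" where A: "\<And>t. invertible (A t)" "\<And>t. E t = (\<lambda>x. A t *v x) ` cball 0 1"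
    by metis
  define \<omega> where "\<omega> = measure lebesgue (cball (0::real^'n) 1)"
  have \<omega>0: "\<omega> > 0" unfolding \<omega>_def by (rule omega_pos)
  have Vt: "V = \<bar>det (A t)\<bar> * \<omega>" for t
    using my_measure_linear_image[of "\<lambda>x. A t *v x" "cball 0 1"] assms(5)[of t] A(2)[of t]
    by (simp add: \<omega>_def)
  define D where "D = V / \<omega>"
  have detD: "\<bar>det (A t)\<bar> = D" for t using Vt[of t] \<omega>0 by (simp add: D_def)
  define N where "N = real CARD('n)"
  have N2: "N \<ge> 2" using assms(1) by (simp add: N_def)
  have a0: "\<alpha> > 0" using assms(2) N2 by (smt (verit) N_def divide_pos_pos)
  have N3: "1 / \<alpha> < N - 1"
  proof -
    have "1 < \<alpha> * (N - 1)" using assms(2) N2 by (simp add: N_def divide_less_eq mult.commute)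
    then show ?thesis using a0 by (simp add: divide_less_eq mult.commute)
  qed
  have rmax: "r_max (E t) = Sup (norm ` (\<lambda>x. A t *v x) ` cball 0 1)" for t
    by (simp add: r_max_def A(2))
  have Mlim: "filterlim (\<lambda>t. Sup (norm ` (\<lambda>x. A t *v x) ` cball 0 1)) at_top F"
    using assms(6) by (simp add: rmax)
  have sph: "sphere_integral (\<lambda>z. k (support_fun (E t) z))
      = N * integral (cball 0 1) (\<lambda>x::real^'n. k (norm (transpose (A t) *v (x /\<^sub>R norm x))))" for t k
    by (simp add: sphere_integral_def A(2) support_ellipsoid N_def)
  show ?thesis
  proof (cases "\<alpha> < 1")
    case True
    define p where "p = 1 / \<alpha> - 1"
    have p0: "0 < p" using True a0 by (simp add: p_def)
    have pN: "p < real CARD('n)" using N3 by (simp add: p_def N_def)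
    have ex: "1 - 1 / \<alpha> = - p" by (simp add: p_def)
    let ?I = "\<lambda>t. integral (cball 0 1) (\<lambda>x::real^'n. norm (transpose (A t) *v (x /\<^sub>R norm x)) powr (-p))"
    have iq: "integral_quantity \<alpha> (E t) = inverse (N * ?I t)" for t
      unfolding integral_quantity_def using True sph[of "\<lambda>s. s powr (1 - 1 / \<alpha>)" t] by (simp add: ex)
    have lim: "(?I \<longlongrightarrow> 0) F" by (rule integral_tendsto_zero[OF A(1) detD p0 pN Mlim])
    have lim2: "((\<lambda>t. N * ?I t) \<longlongrightarrow> 0) F" using tendsto_mult[OF tendsto_const lim, of N] by simp
    have pos: "\<forall>\<^sub>F t in F. 0 < N * ?I t"
      using I_pos[OF A(1)] N2 by (intro always_eventually allI) simp
    show ?thesis unfolding iq by (rule filterlim_inverse_at_top[OF lim2 pos])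
  next
    case False
    then have a1: "\<alpha> = 1" using assms(3) by simp
    define q :: real where "q = 1 / 2"
    have q0: "0 < q" "q < real CARD('n)" using N2 by (auto simp: q_def N_def)
    let ?I = "\<lambda>t. integral (cball 0 1) (\<lambda>x::real^'n. norm (transpose (A t) *v (x /\<^sub>R norm x)) powr (-q))"
    let ?J = "\<lambda>t. integral (cball 0 1) (\<lambda>x::real^'n. ln (norm (transpose (A t) *v (x /\<^sub>R norm x))))"
    have iq: "integral_quantity \<alpha> (E t) = N * ?J t" for t
      unfolding integral_quantity_def using a1 sph[of ln t] by simp
    have lim: "(?I \<longlongrightarrow> 0) F" by (rule integral_tendsto_zero[OF A(1) detD q0 Mlim])
    show ?thesis unfolding iq filterlim_at_top
    proof
      fix Z :: real
      define l where "l = exp (\<bar>Z\<bar> / \<omega>)"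
      have l0: "l > 0" by (simp add: l_def)
      have "\<forall>\<^sub>F t in F. ?I t < \<omega> / l powr q"
        using lim \<omega>0 l0 by (intro order_tendstoD) auto
      then show "\<forall>\<^sub>F t in F. Z \<le> N * ?J t"
      proof eventually_elim
        case (elim t)
        have b1: "(ln l + 1 / q) * \<omega> - l powr q / q * ?I t \<le> ?J t"
          unfolding \<omega>_def by (rule log_lower[OF A(1) q0(1) l0])
        have b2: "l powr q / q * ?I t \<le> l powr q / q * (\<omega> / l powr q)"
          using elim q0 l0 by (intro mult_left_mono) auto
        have b3: "l powr q / q * (\<omega> / l powr q) = \<omega> / q" using l0 by simp
        have b4: "ln l * \<omega> = \<bar>Z\<bar>" using \<omega>0 by (simp add: l_def)
        have b5: "(ln l + 1 / q) * \<omega> = ln l * \<omega> + \<omega> / q" by (simp add: algebra_simps)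
        have J: "\<bar>Z\<bar> \<le> ?J t" using b1 b2 b3 b4 b5 by linarith
        have "?J t \<le> N * ?J t" using J N2 by (simp add: mult_le_cancel_right1 order_trans[OF abs_ge_zero])
        then show ?case using J by linarith
      qed
    qed
  qed
qed


end
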